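(* The symmetric group of an infinite set $X$, with the topology of pointwise convergence (on $X$ discrete), fails topological bounded normal generation. The projective unitary group of an infinite-dimensional Hilbert space, with the (quotient of the) strong operator topology, fails topological bounded normal generation.
   Context: For $g$ in a group $G$, $g^{\pm G}=\{hgh^{-1}:h\in G\}\cup\{hg^{-1}h^{-1}:h\in G\}$; $A^{\cdot n}$ is the set of products of $n$ elements of $A$. A topological group $G$ has topological bounded normal generation if for every nontrivial $g\in G$ there is $n(g)\in\mathbb N$ with $\overline{(g^{\pm G})^{\cdot n(g)}}=G$. The projective unitary group of a Hilbert space $\mathcal H$ is $U(\mathcal H)/\mathbb S^1$. *)

theory Defs
  imports "HOL-Analysis.Analysis" "HOL-Algebra.Bij"
begin

definition conj_pm :: "('g, 'b) monoid_scheme \<Rightarrow> 'g \<Rightarrow> 'g set" where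
  "conj_pm G g =
     {h \<otimes>\<^bsub>G\<^esub> g \<otimes>\<^bsub>G\<^esub> inv\<^bsub>G\<^esub> h | h. h \<in> carrier G} \<union>
     {h \<otimes>\<^bsub>G\<^esub> inv\<^bsub>G\<^esub> g \<otimes>\<^bsub>G\<^esub> inv\<^bsub>G\<^esub> h | h. h \<in> carrier G}"

fun set_pow :: "('g, 'b) monoid_scheme \<Rightarrow> 'g set \<Rightarrow> nat \<Rightarrow> 'g set" where
  "set_pow G A 0 = {\<one>\<^bsub>G\<^esub>}"
| "set_pow G A (Suc n) = {a \<otimes>\<^bsub>G\<^esub> b | a b. a \<in> A \<and> b \<in> set_pow G A n}"

definition top_bounded_normal_generation :: "('g, 'b) monoid_scheme \<Rightarrow> 'g topology \<Rightarrow> bool" where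
  "top_bounded_normal_generation G T \<longleftrightarrow>
     (\<forall>g \<in> carrier G. g \<noteq> \<one>\<^bsub>G\<^esub> \<longrightarrow>
        (\<exists>n::nat. T closure_of (set_pow G (conj_pm G g) n) = carrier G))"

text \<open>The symmetric group of X is BijGroup X (extensional bijections of X);
  pointwise convergence with X discrete = subspace of the product of discrete copies of X.\<close>
definition pointwise_top :: "'a set \<Rightarrow> ('a \<Rightarrow> 'a) topology" where
  "pointwise_top X = subtopology (product_topology (\<lambda>_. discrete_topology X) X) (Bij X)"

text \<open>A complex Hilbert space is encoded as a real Hilbert space (type class real_inner +
  complete_space) together with an orthogonal complex structure J (multiplication by i).\<close>
definition complex_structure :: "('h::real_inner \<Rightarrow> 'h) \<Rightarrow> bool" where
  "complex_structure J \<longleftrightarrow> linear J \<and> (\<forall>x. J (J x) = - x) \<and> (\<forall>x y. inner (J x) (J y) = inner x y)"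

definition cscale :: "('h::real_inner \<Rightarrow> 'h) \<Rightarrow> complex \<Rightarrow> 'h \<Rightarrow> 'h" where
  "cscale J c x = Re c *\<^sub>R x + Im c *\<^sub>R J x"

text \<open>Complex inner product, linear in the first and conjugate-linear in the second argument.\<close>
definition cinner :: "('h::real_inner \<Rightarrow> 'h) \<Rightarrow> 'h \<Rightarrow> 'h \<Rightarrow> complex" where
  "cinner J x y = Complex (inner x y) (inner (J x) y)"

definition infinite_dimensional :: "'h::real_vector itself \<Rightarrow> bool" where
  "infinite_dimensional _ \<longleftrightarrow> \<not> (\<exists>B :: 'h set. finite B \<and> span B = UNIV)"

definition unitary_group :: "('h::real_inner \<Rightarrow> 'h) \<Rightarrow> ('h \<Rightarrow> 'h) set" where
  "unitary_group J = {U. bij U \<and> (\<forall>x y. U (x + y) = U x + U y)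
      \<and> (\<forall>c x. U (cscale J c x) = cscale J c (U x))
      \<and> (\<forall>x y. cinner J (U x) (U y) = cinner J x y)}"

definition SOT_unitary :: "('h::{real_inner,complete_space} \<Rightarrow> 'h) \<Rightarrow> ('h \<Rightarrow> 'h) topology" where
  "SOT_unitary J = subtopology (product_topology (\<lambda>_. euclidean) UNIV) (unitary_group J)"

definition pclass :: "('h::real_inner \<Rightarrow> 'h) \<Rightarrow> ('h \<Rightarrow> 'h) \<Rightarrow> ('h \<Rightarrow> 'h) set" where
  "pclass J U = {(\<lambda>x. cscale J c (U x)) | c. cmod c = 1}"

definition projective_unitary_group :: "('h::real_inner \<Rightarrow> 'h) \<Rightarrow> ('h \<Rightarrow> 'h) set monoid" where
  "projective_unitary_group J =
    \<lparr>carrier = pclass J ` unitary_group J,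
     mult = (\<lambda>A B. {f \<circ> g | f g. f \<in> A \<and> g \<in> B}),
     one = pclass J id\<rparr>"

definition quotient_topology :: "'a topology \<Rightarrow> ('a \<Rightarrow> 'b) \<Rightarrow> 'b topology" where
  "quotient_topology T q =
     topology (\<lambda>V. V \<subseteq> q ` topspace T \<and> openin T {x \<in> topspace T. q x \<in> V})"

end

theory Submission
  imports Defs
begin

definition moved :: "'a set \<Rightarrow> ('a \<Rightarrow> 'a) \<Rightarrow> 'a set" where
  "moved X f = {x \<in> X. f x \<noteq> x}"

lemma BijGroup_mult: "a \<in> Bij X \<Longrightarrow> b \<in> Bij X \<Longrightarrow> a \<otimes>\<^bsub>BijGroup X\<^esub> b = compose X a b"
  by (simp add: BijGroup_def)

lemma Bij_into: "f \<in> Bij X \<Longrightarrow> x \<in> X \<Longrightarrow> f x \<in> X"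
  by (auto simp: Bij_def bij_betw_def)

lemma moved_compose: "a \<in> Bij X \<Longrightarrow> b \<in> Bij X \<Longrightarrow> moved X (compose X a b) \<subseteq> moved X a \<union> moved X b"
  by (auto simp: moved_def compose_def)

lemma BijGroup_one: "\<one>\<^bsub>BijGroup X\<^esub> = (\<lambda>x\<in>X. x)"
  by (simp add: BijGroup_def)

lemma BijGroup_carrier: "carrier (BijGroup X) = Bij X"
  by (simp add: BijGroup_def)

lemma moved_conj:
  assumes h: "h \<in> Bij X" and f: "f \<in> Bij X"
  shows "moved X (h \<otimes>\<^bsub>BijGroup X\<^esub> f \<otimes>\<^bsub>BijGroup X\<^esub> inv\<^bsub>BijGroup X\<^esub> h) \<subseteq> h ` moved X f"
proof -
  interpret group "BijGroup X" by (rule group_BijGroup)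
  define k where "k = inv\<^bsub>BijGroup X\<^esub> h"
  have hC: "h \<in> carrier (BijGroup X)" using h by (simp only: BijGroup_carrier)
  have "k \<in> carrier (BijGroup X)" unfolding k_def by (rule inv_closed[OF hC])
  hence k: "k \<in> Bij X" by (simp only: BijGroup_carrier)
  have "h \<otimes>\<^bsub>BijGroup X\<^esub> k = \<one>\<^bsub>BijGroup X\<^esub>" unfolding k_def by (rule r_inv[OF hC])
  hence hk: "compose X h k = (\<lambda>x\<in>X. x)" by (simp only: BijGroup_mult[OF h k] BijGroup_one)
  have hk': "h (k x) = x" if xX: "x \<in> X" for x
  proof -
    have "compose X h k x = x" using hk xX by simp
    thus ?thesis using xX by (simp add: compose_def)
  qed
  have hf: "h \<otimes>\<^bsub>BijGroup X\<^esub> f \<in> Bij X" using h f by (simp add: BijGroup_mult compose_Bij)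
  have eq: "h \<otimes>\<^bsub>BijGroup X\<^esub> f \<otimes>\<^bsub>BijGroup X\<^esub> k = compose X (compose X h f) k"
    using h f k hf by (simp add: BijGroup_mult)
  show ?thesis unfolding k_def[symmetric] eq
  proof
    fix x assume x: "x \<in> moved X (compose X (compose X h f) k)"
    have xX: "x \<in> X" using x by (simp add: moved_def)
    have kx: "k x \<in> X" using k xX by (rule Bij_into)
    have "h (f (k x)) \<noteq> x" using x xX kx by (simp add: moved_def compose_def)
    hence "f (k x) \<noteq> k x" using hk'[OF xX] by auto
    hence "k x \<in> moved X f" using kx by (simp add: moved_def)
    moreover have "x = h (k x)" using hk'[OF xX] by simp
    ultimately show "x \<in> h ` moved X f" by blast
  qed
qed

lemma set_pow_moved:
  assumes C: "\<And>c. c \<in> C \<Longrightarrow> c \<in> Bij X \<and> finite (moved X c) \<and> card (moved X c) \<le> 2"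
  shows "f \<in> set_pow (BijGroup X) C n \<Longrightarrow> f \<in> Bij X \<and> finite (moved X f) \<and> card (moved X f) \<le> 2 * n"
proof (induction n arbitrary: f)
  case 0
  then have "f = (\<lambda>x\<in>X. x)" by (simp add: BijGroup_def)
  have fB: "f \<in> Bij X" by (subst \<open>f = (\<lambda>x\<in>X. x)\<close>) (rule id_Bij)
  have "moved X f = {}" using \<open>f = (\<lambda>x\<in>X. x)\<close> by (auto simp: moved_def)
  thus ?case using fB by simp
next
  case (Suc n)
  then obtain a b where f: "f = a \<otimes>\<^bsub>BijGroup X\<^esub> b" and a: "a \<in> C" and b: "b \<in> set_pow (BijGroup X) C n"
    by auto
  have a': "a \<in> Bij X" "finite (moved X a)" "card (moved X a) \<le> 2" using C[OF a] by auto
  have b': "b \<in> Bij X" "finite (moved X b)" "card (moved X b) \<le> 2 * n" using Suc.IH[OF b] by auto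
  have f': "f = compose X a b" using f a' b' by (simp add: BijGroup_mult)
  have sub: "moved X f \<subseteq> moved X a \<union> moved X b" using f' moved_compose a' b' by blast
  have "card (moved X f) \<le> card (moved X a \<union> moved X b)"
    using sub a' b' by (intro card_mono) auto
  also have "\<dots> \<le> card (moved X a) + card (moved X b)" by (rule card_Un_le)
  finally have cf: "card (moved X f) \<le> card (moved X a) + card (moved X b)" .
  have "finite (moved X f)" using sub a' b' finite_subset by blast
  moreover have "f \<in> Bij X" using f' a' b' compose_Bij by blast
  moreover have "card (moved X f) \<le> 2 * Suc n" using cf a'(3) b'(3) by simp
  ultimately show ?case by simp
qed

lemma not_in_closure:
  assumes "openin T U" "x \<in> U" "U \<inter> S = {}"
  shows "x \<notin> T closure_of S"
  unfolding in_closure_of using assms by blast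

lemma involution_Bij:
  assumes fX: "\<And>x. x \<in> X \<Longrightarrow> f x \<in> X" and ff: "\<And>x. x \<in> X \<Longrightarrow> f (f x) = x"
  shows "restrict f X \<in> Bij X"
proof -
  have l: "\<forall>a\<in>X. restrict f X (restrict f X a) = a" using fX ff by simp
  have i: "restrict f X ` X \<subseteq> X" using fX by auto
  have "bij_betw (restrict f X) X X" by (rule bij_betw_byWitness[OF l l i i])
  thus ?thesis by (simp add: Bij_def)
qed

theorem part1:
  assumes inf: "infinite X"
  shows "\<not> top_bounded_normal_generation (BijGroup X) (pointwise_top X)"
proof -
  interpret group "BijGroup X" by (rule group_BijGroup)
  obtain e :: "nat \<Rightarrow> 'a" where e: "inj e" "range e \<subseteq> X"
    using infinite_countable_subset[OF inf] by blast
  define a where "a = e 0"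
  define b where "b = e 1"
  have ab: "a \<in> X" "b \<in> X" "a \<noteq> b" using e by (auto simp: a_def b_def inj_def)
  define sw where "sw x = (if x = a then b else if x = b then a else x)" for x
  define g where "g = restrict sw X"
  have gB: "g \<in> Bij X" unfolding g_def by (rule involution_Bij) (use ab in \<open>auto simp: sw_def\<close>)
  have movg: "moved X g = {a, b}" using ab by (auto simp: moved_def g_def sw_def)
  have gg: "g \<otimes>\<^bsub>BijGroup X\<^esub> g = \<one>\<^bsub>BijGroup X\<^esub>"
    using gB ab by (simp add: BijGroup_mult compose_def BijGroup_def) (auto simp: g_def sw_def intro!: ext)
  have invg: "inv\<^bsub>BijGroup X\<^esub> g = g"
    using inv_equality[OF gg] gB by (simp add: BijGroup_def)
  have gne: "g \<noteq> \<one>\<^bsub>BijGroup X\<^esub>"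
  proof
    assume "g = \<one>\<^bsub>BijGroup X\<^esub>"
    hence "g a = a" using ab by (simp add: BijGroup_def)
    thus False using ab by (simp add: g_def sw_def)
  qed
  have C: "c \<in> Bij X \<and> finite (moved X c) \<and> card (moved X c) \<le> 2" if c: "c \<in> conj_pm (BijGroup X) g" for c
  proof -
    have "c \<in> {h \<otimes>\<^bsub>BijGroup X\<^esub> g \<otimes>\<^bsub>BijGroup X\<^esub> inv\<^bsub>BijGroup X\<^esub> h | h. h \<in> carrier (BijGroup X)}"
      using c unfolding conj_pm_def invg by simp
    then obtain h where hC: "h \<in> carrier (BijGroup X)" and h2: "c = h \<otimes>\<^bsub>BijGroup X\<^esub> g \<otimes>\<^bsub>BijGroup X\<^esub> inv\<^bsub>BijGroup X\<^esub> h"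
      by blast
    have hB: "h \<in> Bij X" using hC by (simp add: BijGroup_def)
    have gC: "g \<in> carrier (BijGroup X)" using gB by (simp add: BijGroup_def)
    have "c \<in> carrier (BijGroup X)" unfolding h2 by (intro m_closed inv_closed hC gC)
    hence cB: "c \<in> Bij X" by (simp add: BijGroup_def)
    have sub: "moved X c \<subseteq> h ` {a, b}" using moved_conj[OF hB gB] h2 movg by simp
    have c2: "card (h ` {a,b}) \<le> 2"
      by (rule order_trans[OF card_image_le]) (use ab in simp_all)
    have "finite (h ` {a,b})" by simp
    hence "finite (moved X c)" using sub by (rule finite_subset[rotated])
    moreover have "card (moved X c) \<le> 2"
      using card_mono[OF \<open>finite (h ` {a,b})\<close> sub] c2 by simp
    ultimately show ?thesis using cB by simp
  qed
  define p where "p k = (if even k then Suc k else k - 1)" for k :: nat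
  have pp: "p (p k) = k" for k by (simp add: p_def)
  have pne: "p k \<noteq> k" for k unfolding p_def using odd_pos[of k] by auto
  define s where "s x = (if x \<in> range e then e (p (inv_into UNIV e x)) else x)" for x
  have s_e: "s (e k) = e (p k)" for k using e by (simp add: s_def)
  have sX: "x \<in> X \<Longrightarrow> s x \<in> X" for x using e by (auto simp: s_def)
  have ss: "s (s x) = x" for x
    by (cases "x \<in> range e") (auto simp: s_def pp inv_f_f[OF e(1)])
  define \<sigma> where "\<sigma> = restrict s X"
  have \<sigma>B: "\<sigma> \<in> Bij X" unfolding \<sigma>_def by (rule involution_Bij) (use sX ss in auto)
  show ?thesis
    unfolding top_bounded_normal_generation_def
  proof (intro notI)
    assume H: "\<forall>g\<in>carrier (BijGroup X). g \<noteq> \<one>\<^bsub>BijGroup X\<^esub> \<longrightarrow>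
        (\<exists>n. pointwise_top X closure_of set_pow (BijGroup X) (conj_pm (BijGroup X) g) n = carrier (BijGroup X))"
    have gC: "g \<in> carrier (BijGroup X)" using gB by (simp add: BijGroup_def)
    have cBX: "carrier (BijGroup X) = Bij X" by (simp add: BijGroup_def)
    obtain n where n0: "pointwise_top X closure_of set_pow (BijGroup X) (conj_pm (BijGroup X) g) n = carrier (BijGroup X)"
      using H gne gC by blast
    hence n: "pointwise_top X closure_of set_pow (BijGroup X) (conj_pm (BijGroup X) g) n = Bij X"
      by (simp only: cBX)
    define F where "F = e ` {..2*n}"
    have FX: "F \<subseteq> X" using e by (auto simp: F_def)
    have cardF: "card F = Suc (2 * n)" unfolding F_def using e
      by (simp add: card_image inj_on_subset)
    define P where "P = product_topology (\<lambda>_. discrete_topology X) X"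
    define U where "U = (\<Inter>x\<in>F. {\<tau> \<in> topspace (pointwise_top X). \<tau> x \<in> {\<sigma> x}}) \<inter> topspace (pointwise_top X)"
    have "openin (pointwise_top X) U" unfolding U_def
    proof (rule openin_INT)
      show "finite F" by (simp add: F_def)
      fix x assume "x \<in> F"
      hence "x \<in> X" using FX by auto
      hence "continuous_map (pointwise_top X) (discrete_topology X) (\<lambda>\<tau>. \<tau> x)"
        unfolding pointwise_top_def
        by (intro continuous_map_from_subtopology continuous_map_product_projection)
      moreover have "openin (discrete_topology X) {\<sigma> x}" using \<open>x \<in> X\<close> \<sigma>B Bij_into by auto
      ultimately show "openin (pointwise_top X) {\<tau> \<in> topspace (pointwise_top X). \<tau> x \<in> {\<sigma> x}}"
        by (rule openin_continuous_map_preimage)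
    qed
    moreover have top: "topspace (pointwise_top X) = Bij X"
      unfolding pointwise_top_def
      using Bij_imp_extensional Bij_imp_funcset by (fastforce simp: PiE_iff)
    have "\<sigma> \<in> U" using \<sigma>B by (simp add: U_def top)
    moreover have "U \<inter> set_pow (BijGroup X) (conj_pm (BijGroup X) g) n = {}"
    proof (rule ccontr)
      assume "U \<inter> set_pow (BijGroup X) (conj_pm (BijGroup X) g) n \<noteq> {}"
      then obtain \<tau> where \<tau>U: "\<tau> \<in> U" and \<tau>S: "\<tau> \<in> set_pow (BijGroup X) (conj_pm (BijGroup X) g) n" by blast
      have m: "finite (moved X \<tau>)" "card (moved X \<tau>) \<le> 2 * n" using set_pow_moved[OF C \<tau>S] by auto
      have "F \<subseteq> moved X \<tau>"
      proof
        fix x assume xF: "x \<in> F"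
        then obtain k where k: "x = e k" by (auto simp: F_def)
        have "\<tau> x = \<sigma> x" using \<tau>U xF by (auto simp: U_def)
        have xX: "x \<in> X" using FX xF by blast
        have "\<sigma> x = e (p k)" using xX by (simp add: \<sigma>_def k s_e)
        hence "\<tau> x = e (p k)" using \<open>\<tau> x = \<sigma> x\<close> by simp
        also have "e (p k) \<noteq> x" using k e(1) pne by (metis injD)
        finally show "x \<in> moved X \<tau>" using xX by (simp add: moved_def)
      qed
      hence "card F \<le> card (moved X \<tau>)" using m by (simp add: card_mono)
      thus False using m cardF by simp
    qed
    ultimately have "\<sigma> \<notin> pointwise_top X closure_of set_pow (BijGroup X) (conj_pm (BijGroup X) g) n"
      by (rule not_in_closure)
    thus False using n \<sigma>B by simp
  qed
qed


context
  fixes J :: "'h::{real_inner,complete_space} \<Rightarrow> 'h"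
  assumes cs: "complex_structure J"
begin

lemma J_lin: "linear J" using cs by (simp add: complex_structure_def)
lemma JJ[simp]: "J (J x) = - x" using cs by (simp add: complex_structure_def)
lemma inner_JJ[simp]: "inner (J x) (J y) = inner x y" using cs by (simp add: complex_structure_def)
lemma J_add[simp]: "J (x + y) = J x + J y" using J_lin by (simp add: linear_add)
lemma J_scaleR[simp]: "J (r *\<^sub>R x) = r *\<^sub>R J x" using J_lin by (simp add: linear_scale)
lemma J_minus[simp]: "J (- x) = - J x" using J_lin by (simp add: linear_neg)
lemma J_diff[simp]: "J (x - y) = J x - J y" using J_lin by (simp add: linear_diff)
lemma J_zero[simp]: "J 0 = 0" using J_lin by (simp add: linear_0)
lemma inner_J_left: "inner (J x) y = - inner x (J y)"
proof -
  have "inner (J x) y = inner (J (J x)) (J y)" by (rule inner_JJ[symmetric])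
  also have "\<dots> = - inner x (J y)" by (simp only: JJ inner_minus_left)
  finally show ?thesis .
qed
lemma inner_x_Jx[simp]: "inner x (J x) = 0"
  using inner_J_left[of x x] by (simp add: inner_commute)
lemma inner_Jx_x[simp]: "inner (J x) x = 0"
  using inner_x_Jx by (simp add: inner_commute)
lemma norm_J[simp]: "norm (J x) = norm x"
  by (simp add: norm_eq_sqrt_inner)

lemma cscale_add: "cscale J c (x + y) = cscale J c x + cscale J c y"
  by (simp add: cscale_def algebra_simps)
lemma cscale_scaleR: "cscale J c (r *\<^sub>R x) = r *\<^sub>R cscale J c x"
  by (simp add: cscale_def algebra_simps)
lemma linear_cscale: "linear (cscale J c)"
  by (rule linearI) (simp_all add: cscale_add cscale_scaleR)
lemma cscale_mult: "cscale J c (cscale J d x) = cscale J (c * d) x"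
  by (simp add: cscale_def algebra_simps)
lemma cscale_one[simp]: "cscale J 1 x = x"
  by (simp add: cscale_def)
lemma cscale_plus: "cscale J (a + b) x = cscale J a x + cscale J b x"
  by (simp add: cscale_def algebra_simps)
lemma cscale_diff: "cscale J (a - b) x = cscale J a x - cscale J b x"
  by (simp add: cscale_def algebra_simps)
lemma cscale_minus: "cscale J (- a) x = - cscale J a x"
  by (simp add: cscale_def algebra_simps)
lemma J_cscale: "J (cscale J c x) = cscale J c (J x)"
  by (simp add: cscale_def algebra_simps)
lemma cscale_i: "cscale J \<i> x = J x"
  by (simp add: cscale_def)
lemma cscale_real: "cscale J (complex_of_real r) x = r *\<^sub>R x"
  by (simp add: cscale_def)
lemma inner_cscale: "inner (cscale J c x) (cscale J c y) = (cmod c)^2 * inner x y"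
proof -
  have "inner (cscale J c x) (cscale J c y) =
     (Re c)^2 * inner x y + Re c * Im c * (inner x (J y) + inner (J x) y) + (Im c)^2 * inner (J x) (J y)"
    by (simp add: cscale_def inner_add_left inner_add_right algebra_simps power2_eq_square)
  also have "\<dots> = ((Re c)^2 + (Im c)^2) * inner x y" by (simp add: inner_J_left algebra_simps)
  finally show ?thesis by (simp add: cmod_def)
qed
lemma norm_cscale: "norm (cscale J c x) = cmod c * norm x"
proof -
  have "(norm (cscale J c x))^2 = (cmod c * norm x)^2"
    by (simp add: power2_norm_eq_inner inner_cscale power_mult_distrib)
  thus ?thesis by (simp add: power2_eq_iff_nonneg)
qed

lemma unitary_iff:
  "U \<in> unitary_group J \<longleftrightarrow> bij U \<and> linear U \<and> (\<forall>x. U (J x) = J (U x)) \<and> (\<forall>x y. inner (U x) (U y) = inner x y)"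
proof
  assume U: "U \<in> unitary_group J"
  have add: "U (x + y) = U x + U y" for x y using U by (simp add: unitary_group_def)
  have cs': "U (cscale J c x) = cscale J c (U x)" for c x using U by (simp add: unitary_group_def)
  have ci: "cinner J (U x) (U y) = cinner J x y" for x y using U by (simp add: unitary_group_def)
  have "linear U"
  proof (rule linearI)
    show "U (x + y) = U x + U y" for x y by (rule add)
    show "U (r *\<^sub>R x) = r *\<^sub>R U x" for r x using cs'[of "complex_of_real r" x] by (simp add: cscale_real)
  qed
  moreover have "U (J x) = J (U x)" for x using cs'[of \<i> x] by (simp add: cscale_i)
  moreover have "inner (U x) (U y) = inner x y" for x y using ci[of x y] by (simp add: cinner_def)
  ultimately show "bij U \<and> linear U \<and> (\<forall>x. U (J x) = J (U x)) \<and> (\<forall>x y. inner (U x) (U y) = inner x y)"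
    using U by (simp add: unitary_group_def)
next
  assume U: "bij U \<and> linear U \<and> (\<forall>x. U (J x) = J (U x)) \<and> (\<forall>x y. inner (U x) (U y) = inner x y)"
  have "U (cscale J c x) = cscale J c (U x)" for c x
    using U by (simp add: cscale_def linear_add linear_scale)
  moreover have "cinner J (U x) (U y) = cinner J x y" for x y
    using U by (metis cinner_def)
  ultimately show "U \<in> unitary_group J" using U by (simp add: unitary_group_def linear_add)
qed

lemma unitary_id: "id \<in> unitary_group J"
  by (simp add: unitary_iff linear_id)

lemma unitary_comp: "U \<in> unitary_group J \<Longrightarrow> W \<in> unitary_group J \<Longrightarrow> U \<circ> W \<in> unitary_group J"
  by (simp add: unitary_iff bij_comp linear_compose)

lemma unitary_inv: assumes "U \<in> unitary_group J" shows "inv_into UNIV U \<in> unitary_group J"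
proof -
  have U: "bij U" "linear U" "\<And>x. U (J x) = J (U x)" "\<And>x y. inner (U x) (U y) = inner x y"
    using assms by (auto simp: unitary_iff)
  have ui: "U (inv_into UNIV U x) = x" for x using U(1) by (simp add: bij_is_surj surj_f_inv_f)
  have iu: "inv_into UNIV U (U x) = x" for x using U(1) by (simp add: bij_is_inj)
  have eq: "inv_into UNIV U a = b \<longleftrightarrow> a = U b" for a b using ui iu by metis
  have "linear (inv_into UNIV U)"
  proof (rule linearI)
    show "inv_into UNIV U (x + y) = inv_into UNIV U x + inv_into UNIV U y" for x y
      using eq U(2) ui by (simp add: linear_add)
    show "inv_into UNIV U (r *\<^sub>R x) = r *\<^sub>R inv_into UNIV U x" for r x
      using eq U(2) ui by (simp add: linear_scale)
  qed
  moreover have "inv_into UNIV U (J x) = J (inv_into UNIV U x)" for x using eq U(3) ui by simp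
  moreover have "inner (inv_into UNIV U x) (inv_into UNIV U y) = inner x y" for x y
    using U(4)[of "inv_into UNIV U x" "inv_into UNIV U y"] ui by simp
  ultimately show ?thesis using U(1) by (simp add: unitary_iff bij_imp_bij_inv)
qed

lemma unitary_scalar: assumes "cmod d = 1" shows "cscale J d \<in> unitary_group J"
proof -
  have inv: "cscale J (cnj d) (cscale J d x) = x" "cscale J d (cscale J (cnj d) x) = x" for x
  proof -
    have "d * cnj d = 1" using complex_norm_square[of d] assms by simp
    hence "cnj d * d = 1" "d * cnj d = 1" by (simp_all add: mult.commute)
    thus "cscale J (cnj d) (cscale J d x) = x" "cscale J d (cscale J (cnj d) x) = x"
      by (simp_all add: cscale_mult)
  qed
  have "bij (cscale J d)" by (rule bij_betw_byWitness[where f'="cscale J (cnj d)"]) (use inv in auto)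
  thus ?thesis using assms
    by (simp add: unitary_iff linear_cscale J_cscale inner_cscale)
qed

lemma unitary_cscale_commute: "U \<in> unitary_group J \<Longrightarrow> U (cscale J c x) = cscale J c (U x)"
  by (simp add: unitary_group_def)

end

lemma kernel_trick:
  fixes T F :: "'h::real_inner set"
  assumes T: "finite T" "independent T" and F: "finite F" and c: "card F < card T"
  shows "\<exists>x\<in>span T. x \<noteq> 0 \<and> (\<forall>f\<in>F. inner x f = 0)"
proof (rule ccontr)
  assume H: "\<not> ?thesis"
  define Q where "Q x = (\<Sum>f\<in>F. inner x f *\<^sub>R f)" for x
  have lQ: "linear Q"
    by (rule linearI) (simp_all add: Q_def inner_add_left scaleR_add_left sum.distrib scaleR_sum_right)
  have ker: "Q x = 0 \<Longrightarrow> \<forall>f\<in>F. inner x f = 0" for x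
  proof -
    assume "Q x = 0"
    hence "inner x (Q x) = 0" by simp
    hence "(\<Sum>f\<in>F. (inner x f)^2) = 0"
      by (simp add: Q_def inner_sum_right power2_eq_square)
    thus ?thesis using F by (simp add: sum_nonneg_eq_0_iff)
  qed
  have inj: "inj_on Q (span T)"
  proof (rule inj_onI)
    fix x y assume xy: "x \<in> span T" "y \<in> span T" "Q x = Q y"
    hence "Q (x - y) = 0" using lQ by (simp add: linear_diff)
    hence "\<forall>f\<in>F. inner (x - y) f = 0" by (rule ker)
    moreover have "x - y \<in> span T" using xy by (simp add: span_diff)
    ultimately show "x = y" using H by auto
  qed
  have ind: "independent (Q ` T)"
    using linear_independent_injective_image[OF lQ T(2) inj] .
  have sub: "Q ` T \<subseteq> span F"
  proof
    fix z assume "z \<in> Q ` T"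
    then obtain x where "z = Q x" by auto
    show "z \<in> span F" unfolding \<open>z = Q x\<close> Q_def
      by (rule span_sum) (auto intro: span_scale span_base)
  qed
  have "card (Q ` T) \<le> card F" using independent_span_bound[OF F ind sub] by simp
  moreover have "card (Q ` T) = card T"
    using inj by (meson card_image inj_on_subset span_superset)
  ultimately show False using c by simp
qed

lemma indep_exists:
  assumes "infinite_dimensional TYPE('h::real_inner)"
  shows "\<exists>T::'h set. finite T \<and> independent T \<and> card T = k"
proof (induction k)
  case 0
  then show ?case by (intro exI[of _ "{}"]) (simp add: real_vector.independent_empty)
next
  case (Suc k)
  then obtain T :: "'h set" where T: "finite T" "independent T" "card T = k" by blast
  have "span T \<noteq> UNIV" using assms T(1) by (auto simp: infinite_dimensional_def)
  then obtain y where y: "y \<notin> span T" by blast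
  hence "y \<notin> T" using span_superset by blast
  thus ?case using T y by (intro exI[of _ "insert y T"]) (auto simp: real_vector.independent_insert)
qed

definition con :: "('h::real_inner \<Rightarrow> 'h) \<Rightarrow> 'h set \<Rightarrow> bool" where
  "con J E \<longleftrightarrow> (\<forall>u\<in>E. norm u = 1) \<and> (\<forall>u\<in>E. \<forall>v\<in>E. u \<noteq> v \<longrightarrow> inner u v = 0 \<and> inner u (J v) = 0)"

definition fixes_perp :: "('h::real_inner \<Rightarrow> 'h) \<Rightarrow> 'h set \<Rightarrow> bool" where
  "fixes_perp W F \<longleftrightarrow> (\<forall>x. (\<forall>f\<in>F. inner x f = 0) \<longrightarrow> W x = x)"

definition urefl :: "('h::real_inner \<Rightarrow> 'h) \<Rightarrow> 'h \<Rightarrow> 'h \<Rightarrow> 'h" where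
  "urefl J v x = x - 2 *\<^sub>R (inner x v *\<^sub>R v + inner x (J v) *\<^sub>R J v)"

lemma con_indep: assumes "con J E" shows "independent E"
proof -
  have "pairwise orthogonal E" using assms by (auto simp: con_def pairwise_def orthogonal_def)
  moreover have "0 \<notin> E" using assms by (auto simp: con_def)
  ultimately show ?thesis by (rule pairwise_orthogonal_independent)
qed

context
  fixes J :: "'h::{real_inner,complete_space} \<Rightarrow> 'h"
  assumes cs: "complex_structure J"
begin

lemmas JJ_2b[simp] = JJ[OF cs]
lemmas inner_JJ_2b[simp] = inner_JJ[OF cs]
lemmas J_add_2b[simp] = J_add[OF cs]
lemmas J_scaleR_2b[simp] = J_scaleR[OF cs]
lemmas J_minus_2b[simp] = J_minus[OF cs]
lemmas J_diff_2b[simp] = J_diff[OF cs]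
lemmas J_zero_2b[simp] = J_zero[OF cs]
lemmas inner_x_Jx_2b[simp] = inner_x_Jx[OF cs]
lemmas inner_Jx_x_2b[simp] = inner_Jx_x[OF cs]
lemmas norm_J_2b[simp] = norm_J[OF cs]
lemmas inner_J_left_2b = inner_J_left[OF cs]

lemma con_exists:
  assumes inf: "infinite_dimensional TYPE('h)"
  shows "\<exists>E::'h set. finite E \<and> con J E \<and> card E = k"
proof (induction k)
  case 0
  then show ?case by (intro exI[of _ "{}"]) (auto simp: con_def)
next
  case (Suc k)
  then obtain E :: "'h set" where E: "finite E" "con J E" "card E = k" by blast
  define F where "F = E \<union> J ` E"
  have Ff: "finite F" using E by (simp add: F_def)
  have Fc: "card F < Suc (2 * k)"
    using card_Un_le[of E "J ` E"] card_image_le[OF E(1), of J] E(3) by (simp add: F_def)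
  obtain T :: "'h set" where T: "finite T" "independent T" "card T = Suc (2*k)"
    using indep_exists[OF inf] by blast
  obtain x where x: "x \<noteq> 0" "\<forall>f\<in>F. inner x f = 0"
    using kernel_trick[OF T(1,2) Ff] Fc T(3) by auto
  define y where "y = x /\<^sub>R norm x"
  have ny: "norm y = 1" using x by (simp add: y_def)
  have yF: "\<forall>f\<in>F. inner y f = 0" using x by (simp add: y_def)
  have yE: "y \<notin> E"
  proof
    assume "y \<in> E" hence "inner y y = 0" using yF by (auto simp: F_def)
    thus False using ny by simp
  qed
  have A: "\<forall>u\<in>insert y E. norm u = 1" using ny E(2) by (auto simp: con_def)
  have B: "\<forall>u\<in>insert y E. \<forall>v\<in>insert y E. u \<noteq> v \<longrightarrow> inner u v = 0 \<and> inner u (J v) = 0"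
  proof (intro ballI impI)
    fix u v assume uv: "u \<in> insert y E" "v \<in> insert y E" "u \<noteq> v"
    show "inner u v = 0 \<and> inner u (J v) = 0"
    proof (cases "u = y")
      case True
      hence "v \<in> E" using uv by auto
      thus ?thesis using True yF by (auto simp: F_def)
    next
      case False
      hence u: "u \<in> E" using uv by auto
      show ?thesis
      proof (cases "v = y")
        case True
        have "inner y u = 0" "inner y (J u) = 0" using u yF by (auto simp: F_def)
        moreover have "inner u (J y) = - inner (J u) y" using inner_J_left_2b[of u y] by simp
        ultimately show ?thesis using True by (simp add: inner_commute)
      next
        case False
        hence "v \<in> E" using uv by auto
        thus ?thesis using u uv E(2) by (auto simp: con_def)
      qed
    qed
  qed
  have "con J (insert y E)" using A B by (simp only: con_def)
  thus ?case using E yE by (intro exI[of _ "insert y E"]) auto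
qed

lemma refl_fix: "inner x v = 0 \<Longrightarrow> inner x (J v) = 0 \<Longrightarrow> urefl J v x = x"
  by (simp add: urefl_def)

lemma refl_self: "norm v = 1 \<Longrightarrow> urefl J v v = - v"
proof -
  assume "norm v = 1"
  hence "inner v v = 1" by (metis norm_eq_sqrt_inner real_sqrt_eq_1_iff)
  thus "urefl J v v = - v" by (simp add: urefl_def algebra_simps scaleR_2)
qed
end

context
  fixes J :: "'h::{real_inner,complete_space} \<Rightarrow> 'h"
  assumes cs: "complex_structure J"
begin

lemmas JJ_2c[simp] = JJ[OF cs]
lemmas inner_JJ_2c[simp] = inner_JJ[OF cs]
lemmas J_add_2c[simp] = J_add[OF cs]
lemmas J_scaleR_2c[simp] = J_scaleR[OF cs]
lemmas J_minus_2c[simp] = J_minus[OF cs]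
lemmas J_diff_2c[simp] = J_diff[OF cs]
lemmas J_zero_2c[simp] = J_zero[OF cs]
lemmas inner_x_Jx_2c[simp] = inner_x_Jx[OF cs]
lemmas inner_Jx_x_2c[simp] = inner_Jx_x[OF cs]
lemmas norm_J_2c[simp] = norm_J[OF cs]
lemmas inner_J_left_2c = inner_J_left[OF cs]

lemma urefl_unitary:
  assumes v: "norm v = 1"
  shows "urefl J v \<in> unitary_group J"
proof -
  have vv: "inner v v = 1" using v by (metis norm_eq_sqrt_inner real_sqrt_eq_1_iff)
  have vJv: "inner v (J v) = 0" "inner (J v) v = 0" by simp_all
  have h1: "inner (urefl J v x) v = - inner x v" for x
    by (simp add: urefl_def inner_diff_left inner_add_left vv)
  have h2: "inner (urefl J v x) (J v) = - inner x (J v)" for x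
    by (simp add: urefl_def inner_diff_left inner_add_left vv)
  have inv: "urefl J v (urefl J v x) = x" for x
    by (subst urefl_def[of J v "urefl J v x"]) (simp add: h1 h2, simp add: urefl_def algebra_simps)
  have bij: "bij (urefl J v)" by (rule bij_betw_byWitness[where f'="urefl J v"]) (use inv in auto)
  have lin: "linear (urefl J v)"
    by (rule linearI) (simp_all add: urefl_def inner_add_left algebra_simps)
  have Jc: "urefl J v (J x) = J (urefl J v x)" for x
    by (simp add: urefl_def inner_J_left_2c algebra_simps)
  have inn: "inner (urefl J v x) (urefl J v y) = inner x y" for x y
  proof -
    have "inner (urefl J v x) (urefl J v y) = inner (urefl J v x) y
        - 2 * (inner y v * inner (urefl J v x) v + inner y (J v) * inner (urefl J v x) (J v))"
      by (simp add: urefl_def[of J v y] inner_diff_right inner_add_right algebra_simps inner_commute)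
    also have "\<dots> = inner (urefl J v x) y + 2 * (inner y v * inner x v + inner y (J v) * inner x (J v))"
      by (simp add: h1 h2)
    also have "inner (urefl J v x) y = inner x y - 2 * (inner x v * inner v y + inner x (J v) * inner (J v) y)"
      by (simp add: urefl_def inner_diff_left inner_add_left)
    finally show ?thesis by (simp add: inner_commute algebra_simps)
  qed
  show ?thesis using bij lin Jc inn by (simp add: unitary_iff[OF cs])
qed

lemma refl_prod:
  assumes E: "con J E" and T: "finite T" "T \<subseteq> E"
  shows "\<exists>V\<in>unitary_group J. (\<forall>u\<in>T. V u = - u) \<and>
           (\<forall>x. (\<forall>u\<in>T. inner x u = 0 \<and> inner x (J u) = 0) \<longrightarrow> V x = x)"
  using T
proof (induction T rule: finite_induct)
  case empty
  then show ?case using unitary_id[OF cs] by (intro bexI[of _ id]) auto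
next
  case (insert u T)
  then obtain V where V: "V \<in> unitary_group J" "\<forall>t\<in>T. V t = - t"
    "\<forall>x. (\<forall>t\<in>T. inner x t = 0 \<and> inner x (J t) = 0) \<longrightarrow> V x = x" by auto
  have uE: "u \<in> E" using insert by auto
  have nu: "norm u = 1" using E uE by (auto simp: con_def)
  have lin: "linear V" using V(1) by (simp add: unitary_iff[OF cs])
  have orth: "t \<in> T \<Longrightarrow> inner t u = 0 \<and> inner t (J u) = 0 \<and> inner u t = 0 \<and> inner u (J t) = 0" for t
  proof -
    assume tT: "t \<in> T"
    have tE: "t \<in> E" and tu: "t \<noteq> u" using tT insert by auto
    have c: "\<forall>a\<in>E. \<forall>b\<in>E. a \<noteq> b \<longrightarrow> inner a b = 0 \<and> inner a (J b) = 0" using E by (simp add: con_def)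
    show ?thesis using c[rule_format, OF tE uE tu] c[rule_format, OF uE tE tu[symmetric]] by simp
  qed
  show ?case
  proof (intro bexI[of _ "urefl J u \<circ> V"] conjI ballI allI impI)
    show "urefl J u \<circ> V \<in> unitary_group J" using unitary_comp[OF cs urefl_unitary[OF nu] V(1)] .
  next
    fix t assume t: "t \<in> insert u T"
    show "(urefl J u \<circ> V) t = - t"
    proof (cases "t = u")
      case True
      have "V u = u" using V(3) orth by auto
      thus ?thesis using True refl_self[OF cs nu] by simp
    next
      case False
      hence tT: "t \<in> T" using t by auto
      have "V t = - t" using V(2) tT by auto
      moreover have "urefl J u (- t) = - t" using orth[OF tT] by (intro refl_fix[OF cs]) simp_all
      ultimately show ?thesis by simp
    qed
  next
    fix x assume x: "\<forall>t\<in>insert u T. inner x t = 0 \<and> inner x (J t) = 0"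
    hence "V x = x" using V(3) by auto
    thus "(urefl J u \<circ> V) x = x" using x refl_fix[OF cs] by auto
  qed
qed

end

lemma openin_quotient:
  "openin (quotient_topology T q) V \<longleftrightarrow> V \<subseteq> q ` topspace T \<and> openin T {x \<in> topspace T. q x \<in> V}"
proof -
  have "istopology (\<lambda>V. V \<subseteq> q ` topspace T \<and> openin T {x \<in> topspace T. q x \<in> V})"
  proof -
    let ?L = "\<lambda>V. V \<subseteq> q ` topspace T \<and> openin T {x \<in> topspace T. q x \<in> V}"
    have 1: "\<forall>S S'. ?L S \<longrightarrow> ?L S' \<longrightarrow> ?L (S \<inter> S')"
    proof (intro allI impI)
      fix S S' assume S: "?L S" and S': "?L S'"
      have "{x \<in> topspace T. q x \<in> S \<inter> S'} = {x \<in> topspace T. q x \<in> S} \<inter> {x \<in> topspace T. q x \<in> S'}" by auto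
      moreover have "openin T ({x \<in> topspace T. q x \<in> S} \<inter> {x \<in> topspace T. q x \<in> S'})"
        using S S' by (intro openin_Int) simp_all
      moreover have "S \<inter> S' \<subseteq> q ` topspace T" using S by blast
      ultimately show "?L (S \<inter> S')" by simp
    qed
    have 2: "\<forall>K. (\<forall>S\<in>K. ?L S) \<longrightarrow> ?L (\<Union>K)"
    proof (intro allI impI)
      fix K assume K: "\<forall>S\<in>K. ?L S"
      have "{x \<in> topspace T. q x \<in> \<Union>K} = (\<Union>S\<in>K. {x \<in> topspace T. q x \<in> S})" by auto
      moreover have "openin T (\<Union>S\<in>K. {x \<in> topspace T. q x \<in> S})"
        by (rule openin_Union) (use K in blast)
      moreover have "\<Union>K \<subseteq> q ` topspace T" using K by blast
      ultimately show "?L (\<Union>K)" by simp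
    qed
    show ?thesis unfolding istopology_def using 1 2 by blast
  qed
  thus ?thesis by (simp add: quotient_topology_def)
qed

lemma fixes_perp_comp: "fixes_perp A F1 \<Longrightarrow> fixes_perp B F2 \<Longrightarrow> fixes_perp (A \<circ> B) (F1 \<union> F2)"
  by (simp add: fixes_perp_def)

lemma fixes_perp_inv: assumes b: "bij R" and R: "fixes_perp R F" shows "fixes_perp (inv_into UNIV R) F"
  unfolding fixes_perp_def
proof (intro allI impI)
  fix x assume "\<forall>f\<in>F. inner x f = 0"
  hence Rx: "R x = x" using R by (simp add: fixes_perp_def)
  have "inv_into UNIV R (R x) = x" by (rule inv_into_f_f[OF bij_is_inj[OF b]]) simp
  thus "inv_into UNIV R x = x" using Rx by simp
qed

context
  fixes J :: "'h::{real_inner,complete_space} \<Rightarrow> 'h"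
  assumes cs: "complex_structure J"
begin

lemmas JJ_2d[simp] = JJ[OF cs]
lemmas inner_JJ_2d[simp] = inner_JJ[OF cs]
lemmas J_add_2d[simp] = J_add[OF cs]
lemmas J_scaleR_2d[simp] = J_scaleR[OF cs]
lemmas J_minus_2d[simp] = J_minus[OF cs]
lemmas J_diff_2d[simp] = J_diff[OF cs]
lemmas J_zero_2d[simp] = J_zero[OF cs]
lemmas inner_x_Jx_2d[simp] = inner_x_Jx[OF cs]
lemmas inner_Jx_x_2d[simp] = inner_Jx_x[OF cs]
lemmas norm_J_2d[simp] = norm_J[OF cs]
lemmas inner_J_left_2d = inner_J_left[OF cs]

lemma fixes_perp_conj:
  assumes H: "H \<in> unitary_group J" and R: "fixes_perp R F"
  shows "fixes_perp (H \<circ> R \<circ> inv_into UNIV H) (H ` F)"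
  unfolding fixes_perp_def
proof (intro allI impI)
  fix x assume x: "\<forall>f\<in>H ` F. inner x f = 0"
  have Hb: "bij H" and Hi: "\<And>a b. inner (H a) (H b) = inner a b" using H by (auto simp: unitary_iff[OF cs])
  have hi: "H (inv_into UNIV H x) = x" using Hb by (simp add: bij_is_surj surj_f_inv_f)
  have "\<forall>f\<in>F. inner (inv_into UNIV H x) f = 0"
    using x Hi[of "inv_into UNIV H x"] hi by auto
  hence "R (inv_into UNIV H x) = inv_into UNIV H x" using R by (simp add: fixes_perp_def)
  thus "(H \<circ> R \<circ> inv_into UNIV H) x = x" using hi by simp
qed

lemma pclass_self: "U \<in> pclass J U"
proof -
  have "(\<lambda>x. cscale J 1 (U x)) = U" by (simp add: cscale_one[OF cs])
  thus ?thesis unfolding pclass_def by (intro CollectI exI[of _ 1]) simp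
qed

lemma pclass_eq: assumes "pclass J U = pclass J U'" shows "\<exists>c. cmod c = 1 \<and> U = (\<lambda>x. cscale J c (U' x))"
proof -
  have "U \<in> pclass J U'" using pclass_self[of U] assms by simp
  thus ?thesis unfolding pclass_def by blast
qed

lemma pu_mult:
  assumes U: "U \<in> unitary_group J" and W: "W \<in> unitary_group J"
  shows "pclass J U \<otimes>\<^bsub>projective_unitary_group J\<^esub> pclass J W = pclass J (U \<circ> W)"
proof -
  have "{f \<circ> g |f g. f \<in> pclass J U \<and> g \<in> pclass J W} = pclass J (U \<circ> W)"
  proof (rule subset_antisym; rule subsetI)
    fix h assume "h \<in> {f \<circ> g |f g. f \<in> pclass J U \<and> g \<in> pclass J W}"
    then obtain c d where cd: "cmod c = 1" "cmod d = 1" "h = (\<lambda>x. cscale J c (U x)) \<circ> (\<lambda>x. cscale J d (W x))"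
      by (auto simp: pclass_def)
    have "h = (\<lambda>x. cscale J (c * d) ((U \<circ> W) x))"
      using cd(3) by (auto simp: unitary_cscale_commute[OF cs U] cscale_mult[OF cs])
    moreover have "cmod (c * d) = 1" using cd by (simp add: norm_mult)
    ultimately show "h \<in> pclass J (U \<circ> W)" by (auto simp: pclass_def)
  next
    fix h assume "h \<in> pclass J (U \<circ> W)"
    then obtain e where e: "cmod e = 1" "h = (\<lambda>x. cscale J e ((U \<circ> W) x))" by (auto simp: pclass_def)
    have "h = (\<lambda>x. cscale J e (U x)) \<circ> (\<lambda>x. cscale J 1 (W x))"
      using e by (auto simp: cscale_one[OF cs])
    moreover have "(\<lambda>x. cscale J e (U x)) \<in> pclass J U"
      using e by (auto simp: pclass_def)
    moreover have "(\<lambda>x. cscale J 1 (W x)) \<in> pclass J W"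
      unfolding pclass_def by (rule CollectI, rule exI[of _ 1]) simp
    ultimately show "h \<in> {f \<circ> g |f g. f \<in> pclass J U \<and> g \<in> pclass J W}" by blast
  qed
  thus ?thesis by (simp add: projective_unitary_group_def)
qed

lemma pu_carrier: "carrier (projective_unitary_group J) = pclass J ` unitary_group J"
  by (simp add: projective_unitary_group_def)

lemma pu_one: "\<one>\<^bsub>projective_unitary_group J\<^esub> = pclass J id"
  by (simp add: projective_unitary_group_def)

lemma pu_group: "group (projective_unitary_group J)"
proof (rule groupI)
  fix x y assume "x \<in> carrier (projective_unitary_group J)" "y \<in> carrier (projective_unitary_group J)"
  then obtain U W where "U \<in> unitary_group J" "W \<in> unitary_group J" "x = pclass J U" "y = pclass J W"
    by (auto simp: pu_carrier)
  thus "x \<otimes>\<^bsub>projective_unitary_group J\<^esub> y \<in> carrier (projective_unitary_group J)"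
    by (simp add: pu_mult pu_carrier unitary_comp[OF cs])
next
  show "\<one>\<^bsub>projective_unitary_group J\<^esub> \<in> carrier (projective_unitary_group J)"
    by (simp add: pu_one pu_carrier unitary_id[OF cs])
next
  fix x y z assume "x \<in> carrier (projective_unitary_group J)" "y \<in> carrier (projective_unitary_group J)"
    "z \<in> carrier (projective_unitary_group J)"
  then obtain U V W where "U \<in> unitary_group J" "V \<in> unitary_group J" "W \<in> unitary_group J"
    "x = pclass J U" "y = pclass J V" "z = pclass J W"
    by (auto simp: pu_carrier)
  thus "x \<otimes>\<^bsub>projective_unitary_group J\<^esub> y \<otimes>\<^bsub>projective_unitary_group J\<^esub> z =
        x \<otimes>\<^bsub>projective_unitary_group J\<^esub> (y \<otimes>\<^bsub>projective_unitary_group J\<^esub> z)"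
    by (simp add: pu_mult unitary_comp[OF cs] o_assoc)
next
  fix x assume "x \<in> carrier (projective_unitary_group J)"
  then obtain U where "U \<in> unitary_group J" "x = pclass J U" by (auto simp: pu_carrier)
  thus "\<one>\<^bsub>projective_unitary_group J\<^esub> \<otimes>\<^bsub>projective_unitary_group J\<^esub> x = x"
    by (simp add: pu_one pu_mult unitary_id[OF cs])
next
  fix x assume "x \<in> carrier (projective_unitary_group J)"
  then obtain U where U: "U \<in> unitary_group J" "x = pclass J U" by (auto simp: pu_carrier)
  have "inv_into UNIV U \<circ> U = id" using U(1) by (simp add: unitary_iff[OF cs] bij_is_inj inv_o_cancel)
  hence "pclass J (inv_into UNIV U) \<otimes>\<^bsub>projective_unitary_group J\<^esub> x = \<one>\<^bsub>projective_unitary_group J\<^esub>"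
    using U by (simp add: pu_mult unitary_inv[OF cs] pu_one)
  moreover have "pclass J (inv_into UNIV U) \<in> carrier (projective_unitary_group J)"
    using U by (simp add: pu_carrier unitary_inv[OF cs])
  ultimately show "\<exists>y\<in>carrier (projective_unitary_group J). y \<otimes>\<^bsub>projective_unitary_group J\<^esub> x = \<one>\<^bsub>projective_unitary_group J\<^esub>"
    by blast
qed

lemma pu_inv:
  assumes U: "U \<in> unitary_group J"
  shows "inv\<^bsub>projective_unitary_group J\<^esub> (pclass J U) = pclass J (inv_into UNIV U)"
proof -
  interpret group "projective_unitary_group J" by (rule pu_group)
  have "inv_into UNIV U \<circ> U = id" using U by (simp add: unitary_iff[OF cs] bij_is_inj inv_o_cancel)
  hence "pclass J (inv_into UNIV U) \<otimes>\<^bsub>projective_unitary_group J\<^esub> pclass J U = \<one>\<^bsub>projective_unitary_group J\<^esub>"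
    using U by (simp add: pu_mult unitary_inv[OF cs] pu_one)
  thus ?thesis using U by (intro inv_equality) (auto simp: pu_carrier unitary_inv[OF cs])
qed

end

context
  fixes J :: "'h::{real_inner,complete_space} \<Rightarrow> 'h"
  assumes cs: "complex_structure J"
begin

lemma estimate:
  assumes T: "finite T" and n1: "\<forall>u\<in>T. norm u = 1" and orth: "\<forall>u\<in>T. \<forall>v\<in>T. u \<noteq> v \<longrightarrow> inner u v = 0"
    and W: "linear W" "fixes_perp W F" and F: "finite F" "card F < card T"
    and close: "\<forall>u\<in>T. norm (W u - cscale J s u) \<le> \<epsilon>"
  shows "cmod (1 - s) \<le> real (card T) * \<epsilon>"
proof -
  have "pairwise orthogonal T" using orth by (auto simp: pairwise_def orthogonal_def)
  moreover have "0 \<notin> T" using n1 by auto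
  ultimately have ind: "independent T" by (rule pairwise_orthogonal_independent)
  obtain x where x: "x \<in> span T" "x \<noteq> 0" "\<forall>f\<in>F. inner x f = 0"
    using kernel_trick[OF T ind F] by blast
  have Wx: "W x = x" using W(2) x(3) by (simp add: fixes_perp_def)
  obtain a where a: "x = (\<Sum>v\<in>T. a v *\<^sub>R v)" using x(1) real_vector.span_finite[OF T] by auto
  have ia: "inner x u = a u" if u: "u \<in> T" for u
  proof -
    have "inner x u = (\<Sum>v\<in>T. a v * inner v u)" by (simp add: a inner_sum_left)
    also have "\<dots> = (\<Sum>v\<in>T. if v = u then a v else 0)"
    proof (rule sum.cong)
      fix v assume v: "v \<in> T"
      show "a v * inner v u = (if v = u then a v else 0)"
      proof (cases "v = u")
        case True
        have "inner u u = 1" using n1 u by (metis norm_eq_sqrt_inner real_sqrt_eq_1_iff)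
        thus ?thesis using True by simp
      qed (use orth u v in auto)
    qed simp
    also have "\<dots> = a u" using T u by simp
    finally show ?thesis .
  qed
  have ab: "\<bar>a u\<bar> \<le> norm x" if u: "u \<in> T" for u
    using Cauchy_Schwarz_ineq2[of x u] ia[OF u] n1 u by simp
  have "x - cscale J s x = W x - cscale J s x" by (simp add: Wx)
  also have "\<dots> = (\<Sum>v\<in>T. a v *\<^sub>R (W v - cscale J s v))"
    using W(1) linear_cscale[OF cs, of s]
    by (simp add: a linear_sum linear_scale sum_subtractf scaleR_diff_right)
  finally have eq: "x - cscale J s x = (\<Sum>v\<in>T. a v *\<^sub>R (W v - cscale J s v))" .
  have "norm (x - cscale J s x) \<le> (\<Sum>v\<in>T. norm (a v *\<^sub>R (W v - cscale J s v)))"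
    unfolding eq by (rule norm_sum)
  also have "\<dots> \<le> (\<Sum>v\<in>T. norm x * \<epsilon>)"
  proof (rule sum_mono)
    fix v assume v: "v \<in> T"
    show "norm (a v *\<^sub>R (W v - cscale J s v)) \<le> norm x * \<epsilon>"
      using ab[OF v] close v by (simp add: mult_mono)
  qed
  also have "\<dots> = real (card T) * \<epsilon> * norm x" by simp
  finally have le: "norm (x - cscale J s x) \<le> real (card T) * \<epsilon> * norm x" .
  have "cscale J (1 - s) x = x - cscale J s x" by (simp add: cscale_diff[OF cs] cscale_one[OF cs])
  hence "cmod (1 - s) * norm x \<le> real (card T) * \<epsilon> * norm x"
    using le norm_cscale[OF cs, of "1 - s" x] by simp
  thus ?thesis using x(2) by simp
qed

end

context
  fixes J :: "'h::{real_inner,complete_space} \<Rightarrow> 'h"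
  assumes cs: "complex_structure J"
begin

lemmas JJ_2f[simp] = JJ[OF cs]
lemmas inner_JJ_2f[simp] = inner_JJ[OF cs]
lemmas J_add_2f[simp] = J_add[OF cs]
lemmas J_scaleR_2f[simp] = J_scaleR[OF cs]
lemmas J_minus_2f[simp] = J_minus[OF cs]
lemmas J_diff_2f[simp] = J_diff[OF cs]
lemmas J_zero_2f[simp] = J_zero[OF cs]
lemmas inner_x_Jx_2f[simp] = inner_x_Jx[OF cs]
lemmas inner_Jx_x_2f[simp] = inner_Jx_x[OF cs]
lemmas norm_J_2f[simp] = norm_J[OF cs]

lemma dist_cscale: "cmod d = 1 \<Longrightarrow> dist (cscale J d a) (cscale J d b) = dist a b"
proof -
  assume d: "cmod d = 1"
  have "cscale J d a - cscale J d b = cscale J d (a - b)"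
    using linear_cscale[OF cs, of d] by (simp add: linear_diff)
  thus ?thesis using d norm_cscale[OF cs, of d "a - b"] by (simp add: dist_norm)
qed

lemma bound:
  assumes g: "g = pclass J R" and R: "R \<in> unitary_group J" and RF: "fixes_perp R F0" "finite F0" "card F0 \<le> 2"
  shows "A \<in> set_pow (projective_unitary_group J) (conj_pm (projective_unitary_group J) g) n \<Longrightarrow>
    \<exists>W. W \<in> unitary_group J \<and> A = pclass J W \<and> (\<exists>F. finite F \<and> card F \<le> 2 * n \<and> fixes_perp W F)"
proof (induction n arbitrary: A)
  case 0
  hence "A = pclass J id" by (simp add: pu_one[OF cs])
  moreover have "fixes_perp id {}" by (simp add: fixes_perp_def)
  moreover have "finite {}" "card {} \<le> 2 * 0" by simp_all
  ultimately show ?case using unitary_id[OF cs] by blast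
next
  case (Suc n)
  let ?G = "projective_unitary_group J"
  obtain a b where ab: "A = a \<otimes>\<^bsub>?G\<^esub> b" "a \<in> conj_pm ?G g" "b \<in> set_pow ?G (conj_pm ?G g) n"
    using Suc.prems by auto
  obtain W F where W: "W \<in> unitary_group J" "b = pclass J W" "finite F" "card F \<le> 2 * n" "fixes_perp W F"
    using Suc.IH[OF ab(3)] by blast
  have Rb: "bij R" using R by (simp add: unitary_iff[OF cs])
  have Ri: "inv\<^bsub>?G\<^esub> g = pclass J (inv_into UNIV R)" using pu_inv[OF cs R] g by simp
  have Ru: "inv_into UNIV R \<in> unitary_group J" using unitary_inv[OF cs R] .
  have Rf: "fixes_perp (inv_into UNIV R) F0" using fixes_perp_inv[OF Rb RF(1)] .
  from ab(2) consider (c1) h where "h \<in> carrier ?G" "a = h \<otimes>\<^bsub>?G\<^esub> g \<otimes>\<^bsub>?G\<^esub> inv\<^bsub>?G\<^esub> h"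
    | (c2) h where "h \<in> carrier ?G" "a = h \<otimes>\<^bsub>?G\<^esub> inv\<^bsub>?G\<^esub> g \<otimes>\<^bsub>?G\<^esub> inv\<^bsub>?G\<^esub> h"
    unfolding conj_pm_def by blast
  hence "\<exists>R' h. R' \<in> unitary_group J \<and> fixes_perp R' F0 \<and> h \<in> carrier ?G \<and>
      a = h \<otimes>\<^bsub>?G\<^esub> pclass J R' \<otimes>\<^bsub>?G\<^esub> inv\<^bsub>?G\<^esub> h"
  proof cases
    case (c1 h)
    show ?thesis by (rule exI[of _ R], rule exI[of _ h]) (simp add: R RF(1) c1 flip: g)
  next
    case (c2 h)
    show ?thesis by (rule exI[of _ "inv_into UNIV R"], rule exI[of _ h]) (simp add: Ru Rf c2 flip: Ri)
  qed
  then obtain R' h where R': "R' \<in> unitary_group J" "fixes_perp R' F0" "h \<in> carrier ?G"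
    "a = h \<otimes>\<^bsub>?G\<^esub> pclass J R' \<otimes>\<^bsub>?G\<^esub> inv\<^bsub>?G\<^esub> h" by blast
  obtain H where H: "H \<in> unitary_group J" "h = pclass J H" using R'(3) by (auto simp: pu_carrier[OF cs])
  have Hi: "inv_into UNIV H \<in> unitary_group J" using unitary_inv[OF cs H(1)] .
  have a: "a = pclass J (H \<circ> R' \<circ> inv_into UNIV H)"
    using R'(4) H R'(1) Hi by (simp add: pu_inv[OF cs] pu_mult[OF cs] unitary_comp[OF cs])
  have aU: "H \<circ> R' \<circ> inv_into UNIV H \<in> unitary_group J"
    using H(1) R'(1) Hi by (simp add: unitary_comp[OF cs])
  have afix: "fixes_perp (H \<circ> R' \<circ> inv_into UNIV H) (H ` F0)" using fixes_perp_conj[OF cs H(1) R'(2)] .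
  have cH: "card (H ` F0) \<le> 2" using card_image_le[OF RF(2), of H] RF(3) by simp
  have A: "A = pclass J ((H \<circ> R' \<circ> inv_into UNIV H) \<circ> W)"
    using ab(1) a W(2) aU W(1) by (simp add: pu_mult[OF cs])
  have "card (H ` F0 \<union> F) \<le> 2 * Suc n"
    using card_Un_le[of "H ` F0" F] cH W(4) by simp
  moreover have "fixes_perp ((H \<circ> R' \<circ> inv_into UNIV H) \<circ> W) (H ` F0 \<union> F)"
    using fixes_perp_comp[OF afix W(5)] .
  moreover have "(H \<circ> R' \<circ> inv_into UNIV H) \<circ> W \<in> unitary_group J" using aU W(1) by (simp add: unitary_comp[OF cs])
  moreover have "finite (H ` F0 \<union> F)" using RF(2) W(3) by simp
  ultimately show ?case using A by blast
qed

end

theorem part2: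
  fixes J :: "'h::{real_inner,complete_space} \<Rightarrow> 'h"
  assumes cs: "complex_structure J" and inf: "infinite_dimensional TYPE('h)"
  shows "\<not> top_bounded_normal_generation (projective_unitary_group J)
                 (quotient_topology (SOT_unitary J) (pclass J))"
proof
  let ?G = "projective_unitary_group J"
  let ?Q = "quotient_topology (SOT_unitary J) (pclass J)"
  assume tb: "top_bounded_normal_generation ?G ?Q"
  interpret group ?G by (rule pu_group[OF cs])
  obtain E0 :: "'h set" where E0: "finite E0" "con J E0" "card E0 = 2" using con_exists[OF cs inf] by blast
  obtain v w where vw: "E0 = {v, w}" "v \<noteq> w" using E0(3) by (meson card_2_iff)
  have nv: "norm v = 1" using E0(2) vw by (auto simp: con_def)
  have wv: "inner w v = 0" "inner w (J v) = 0" using E0(2) vw by (auto simp: con_def)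
  have vv: "inner v v = 1" using nv by (simp flip: power2_norm_eq_inner)
  have vJv: "inner (J v) v = 0" using inner_Jx_x[OF cs] .
  define R where "R = urefl J v"
  have RU: "R \<in> unitary_group J" unfolding R_def by (rule urefl_unitary[OF cs nv])
  have Rfix: "fixes_perp R {v, J v}" by (auto simp: fixes_perp_def R_def refl_fix[OF cs])
  define g where "g = pclass J R"
  have gC: "g \<in> carrier ?G" using RU by (simp add: g_def pu_carrier[OF cs])
  have gne: "g \<noteq> \<one>\<^bsub>?G\<^esub>"
  proof
    assume "g = \<one>\<^bsub>?G\<^esub>"
    hence "pclass J R = pclass J id" by (simp add: g_def pu_one[OF cs])
    then obtain c where c: "cmod c = 1" "R = (\<lambda>x. cscale J c (id x))" using pclass_eq[OF cs] by blast
    have nw: "norm w = 1" using E0(2) vw by (auto simp: con_def)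
    have ww: "inner w w = 1" using nw by (simp flip: power2_norm_eq_inner)
    have i1: "inner (cscale J c v) v = Re c" by (simp add: cscale_def vv vJv inner_add_left)
    have r1: "R v = cscale J c v" using c(2) by simp
    have r2: "R v = - v" using refl_self[OF cs nv] by (simp add: R_def)
    have cv: "cscale J c v = - v" using trans[OF sym[OF r1] r2] .
    have "Re c = inner (- v) v" using i1 by (simp only: cv)
    hence A: "Re c = -1" using vv by simp
    have i2: "inner (cscale J c w) w = Re c"
      by (simp add: cscale_def ww inner_Jx_x[OF cs] inner_add_left)
    have r3: "R w = cscale J c w" using c(2) by simp
    have r4: "R w = w" using refl_fix[OF cs wv] by (simp add: R_def)
    have cw: "cscale J c w = w" using trans[OF sym[OF r3] r4] .
    have "Re c = inner w w" using i2 by (simp only: cw)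
    hence "Re c = 1" using ww by simp
    thus False using A by simp
  qed
  obtain n where n: "?Q closure_of set_pow ?G (conj_pm ?G g) n = carrier ?G"
    using tb gC gne by (auto simp: top_bounded_normal_generation_def)
  define m where "m = Suc (2 * n)"
  obtain E :: "'h set" where E: "finite E" "con J E" "card E = 2 * m" using con_exists[OF cs inf] by blast
  obtain Tn where Tn: "Tn \<subseteq> E" "card Tn = m" using ex_card[of m E] E(3) by auto
  define Tp where "Tp = E - Tn"
  have Tnf: "finite Tn" using Tn(1) E(1) finite_subset by auto
  have Tpf: "finite Tp" using E(1) by (simp add: Tp_def)
  have cTp: "card Tp = m" using Tn E by (simp add: Tp_def card_Diff_subset Tnf)
  have Ecp: "\<forall>a\<in>E. \<forall>b\<in>E. a \<noteq> b \<longrightarrow> inner a b = 0 \<and> inner a (J b) = 0" and En: "\<forall>a\<in>E. norm a = 1"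
    using E(2) by (auto simp: con_def)
  obtain V where V: "V \<in> unitary_group J" "\<forall>u\<in>Tn. V u = - u"
    "\<forall>x. (\<forall>u\<in>Tn. inner x u = 0 \<and> inner x (J u) = 0) \<longrightarrow> V x = x"
    using refl_prod[OF cs E(2) Tnf Tn(1)] by blast
  have Vp: "\<forall>u\<in>Tp. V u = u"
  proof
    fix u assume u: "u \<in> Tp"
    have "\<forall>t\<in>Tn. inner u t = 0 \<and> inner u (J t) = 0"
    proof
      fix t assume t: "t \<in> Tn"
      have "u \<in> E" "t \<in> E" "u \<noteq> t" using u t Tn(1) by (auto simp: Tp_def)
      thus "inner u t = 0 \<and> inner u (J t) = 0" using Ecp by blast
    qed
    thus "V u = u" using V(3) by blast
  qed
  define \<epsilon> :: real where "\<epsilon> = 1 / (2 * real m)"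
  have \<epsilon>pos: "\<epsilon> > 0" by (simp add: \<epsilon>_def m_def)
  define N where "N = {U \<in> unitary_group J. \<exists>c. cmod c = 1 \<and> (\<forall>u\<in>Tn. U u \<in> ball (- cscale J c u) \<epsilon>)
       \<and> (\<forall>u\<in>Tp. U u \<in> ball (cscale J c u) \<epsilon>)}"
  have sat: "(\<lambda>x. cscale J d (U x)) \<in> N" if U: "U \<in> N" and d: "cmod d = 1" for U d
  proof -
    obtain c where c: "cmod c = 1" "\<forall>u\<in>Tn. U u \<in> ball (- cscale J c u) \<epsilon>" "\<forall>u\<in>Tp. U u \<in> ball (cscale J c u) \<epsilon>"
      and UU: "U \<in> unitary_group J" using U unfolding N_def by blast
    have "cscale J d \<circ> U \<in> unitary_group J" using unitary_comp[OF cs unitary_scalar[OF cs d] UU] .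
    hence u1: "(\<lambda>x. cscale J d (U x)) \<in> unitary_group J" by (simp add: comp_def)
    have m1: "cmod (d * c) = 1" using c d by (simp add: norm_mult)
    have "\<forall>u\<in>Tn. cscale J d (U u) \<in> ball (- cscale J (d * c) u) \<epsilon>"
    proof
      fix u assume u: "u \<in> Tn"
      have "- cscale J (d * c) u = cscale J d (- cscale J c u)"
        using linear_neg[OF linear_cscale[OF cs, of d]] by (simp add: cscale_mult[OF cs, symmetric])
      thus "cscale J d (U u) \<in> ball (- cscale J (d * c) u) \<epsilon>"
        using c(2) u dist_cscale[OF cs d] by (simp add: mem_ball)
    qed
    moreover have "\<forall>u\<in>Tp. cscale J d (U u) \<in> ball (cscale J (d * c) u) \<epsilon>"
    proof
      fix u assume u: "u \<in> Tp"
      have "cscale J (d * c) u = cscale J d (cscale J c u)" by (simp add: cscale_mult[OF cs])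
      thus "cscale J d (U u) \<in> ball (cscale J (d * c) u) \<epsilon>"
        using c(3) u dist_cscale[OF cs d] by (simp add: mem_ball)
    qed
    ultimately show ?thesis using u1 m1 unfolding N_def by blast
  qed
  let ?P = "product_topology (\<lambda>_. euclidean) (UNIV::'h set) :: ('h \<Rightarrow> 'h) topology"
  have topP: "topspace ?P = UNIV" by simp
  have topS: "topspace (SOT_unitary J) = unitary_group J" by (simp add: SOT_unitary_def)
  have preo: "openin ?P {U \<in> topspace ?P. U u \<in> ball y \<epsilon>}" for u y
  proof (rule openin_continuous_map_preimage)
    show "continuous_map ?P euclidean (\<lambda>U. U u)" using continuous_map_product_projection[of u UNIV "\<lambda>_. euclidean"] by simp
    show "openin euclidean (ball y \<epsilon>)" by simp
  qed
  define N0 where "N0 = (\<Union>c\<in>{c. cmod c = 1}. ((\<Inter>u\<in>Tn. {U \<in> topspace ?P. U u \<in> ball (- cscale J c u) \<epsilon>}) \<inter> topspace ?P)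
        \<inter> ((\<Inter>u\<in>Tp. {U \<in> topspace ?P. U u \<in> ball (cscale J c u) \<epsilon>}) \<inter> topspace ?P))"
  have A: "openin ?P ((\<Inter>u\<in>Tn. {U \<in> topspace ?P. U u \<in> ball (- cscale J c u) \<epsilon>}) \<inter> topspace ?P)" for c
    by (rule openin_INT[OF Tnf preo])
  have B: "openin ?P ((\<Inter>u\<in>Tp. {U \<in> topspace ?P. U u \<in> ball (cscale J c u) \<epsilon>}) \<inter> topspace ?P)" for c
    by (rule openin_INT[OF Tpf preo])
  have "openin ?P N0" unfolding N0_def
    by (rule openin_Union) (blast intro: openin_Int A B)
  moreover have "N = unitary_group J \<inter> N0" by (auto simp: N_def N0_def)
  ultimately have Nopen: "openin (SOT_unitary J) N" unfolding SOT_unitary_def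
    by (simp add: openin_subtopology_Int2)
  define Ob where "Ob = pclass J ` N"
  have NU: "N \<subseteq> unitary_group J" by (auto simp: N_def)
  have pre: "{U \<in> topspace (SOT_unitary J). pclass J U \<in> Ob} = N"
  proof (rule subset_antisym; rule subsetI)
    fix U assume "U \<in> {U \<in> topspace (SOT_unitary J). pclass J U \<in> Ob}"
    then obtain U' where U': "U' \<in> N" "pclass J U = pclass J U'" by (auto simp: Ob_def)
    obtain c where "cmod c = 1" "U = (\<lambda>x. cscale J c (U' x))" using pclass_eq[OF cs U'(2)] by blast
    thus "U \<in> N" using sat[OF U'(1)] by simp
  next
    fix U assume "U \<in> N"
    thus "U \<in> {U \<in> topspace (SOT_unitary J). pclass J U \<in> Ob}" using NU topS by (auto simp: Ob_def)
  qed
  have Oopen: "openin ?Q Ob"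
    unfolding openin_quotient pre using Nopen NU topS by (auto simp: Ob_def)
  have VN: "V \<in> N"
  proof -
    have "\<forall>u\<in>Tn. V u \<in> ball (- cscale J 1 u) \<epsilon>" using V(2) \<epsilon>pos by (simp add: cscale_one[OF cs])
    moreover have "\<forall>u\<in>Tp. V u \<in> ball (cscale J 1 u) \<epsilon>" using Vp \<epsilon>pos by (simp add: cscale_one[OF cs])
    ultimately show ?thesis using V(1) unfolding N_def by (intro CollectI conjI exI[of _ 1]) simp_all
  qed
  have BO: "pclass J V \<in> Ob" using VN by (simp add: Ob_def)
  have cF0: "card {v, J v} \<le> 2" by (cases "v = J v") auto
  have disj: "Ob \<inter> set_pow ?G (conj_pm ?G g) n = {}"
  proof (rule ccontr)
    assume "Ob \<inter> set_pow ?G (conj_pm ?G g) n \<noteq> {}"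
    then obtain A where AO: "A \<in> Ob" and AS: "A \<in> set_pow ?G (conj_pm ?G g) n" by blast
    obtain W F where W: "W \<in> unitary_group J" "A = pclass J W" "finite F" "card F \<le> 2 * n" "fixes_perp W F"
      using bound[OF cs g_def RU Rfix _ cF0 AS] by blast
    obtain U' where U': "U' \<in> N" "A = pclass J U'" using AO by (auto simp: Ob_def)
    obtain c0 where "cmod c0 = 1" "W = (\<lambda>x. cscale J c0 (U' x))" using pclass_eq[OF cs] W(2) U'(2) by metis
    hence WN: "W \<in> N" using sat[OF U'(1)] by simp
    then obtain c where c: "cmod c = 1" "\<forall>u\<in>Tn. W u \<in> ball (- cscale J c u) \<epsilon>" "\<forall>u\<in>Tp. W u \<in> ball (cscale J c u) \<epsilon>"
      unfolding N_def by blast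
    have lin: "linear W" using W(1) by (simp add: unitary_iff[OF cs])
    have cFm: "card F < m" using W(4) by (simp add: m_def)
    have me: "real m * \<epsilon> = 1/2" by (simp add: \<epsilon>_def m_def)
    have n1: "\<forall>u\<in>Tn. norm u = 1" "\<forall>u\<in>Tp. norm u = 1" using En Tn(1) by (auto simp: Tp_def)
    have o1: "\<forall>u\<in>Tn. \<forall>v\<in>Tn. u \<noteq> v \<longrightarrow> inner u v = 0" using Ecp Tn(1) by blast
    have o2: "\<forall>u\<in>Tp. \<forall>v\<in>Tp. u \<noteq> v \<longrightarrow> inner u v = 0" using Ecp by (auto simp: Tp_def)
    have cl1: "\<forall>u\<in>Tn. norm (W u - cscale J (- c) u) \<le> \<epsilon>"
    proof
      fix u assume u: "u \<in> Tn"
      have "norm (W u - cscale J (- c) u) = dist (W u) (- cscale J c u)" by (simp add: dist_norm cscale_minus[OF cs])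
      also have "\<dots> = dist (- cscale J c u) (W u)" by (rule dist_commute)
      also have "\<dots> < \<epsilon>" using c(2) u by (simp add: mem_ball)
      finally show "norm (W u - cscale J (- c) u) \<le> \<epsilon>" by simp
    qed
    have cl2: "\<forall>u\<in>Tp. norm (W u - cscale J c u) \<le> \<epsilon>"
    proof
      fix u assume u: "u \<in> Tp"
      have "norm (W u - cscale J c u) = dist (W u) (cscale J c u)" by (simp add: dist_norm)
      also have "\<dots> = dist (cscale J c u) (W u)" by (rule dist_commute)
      also have "\<dots> < \<epsilon>" using c(3) u by (simp add: mem_ball)
      finally show "norm (W u - cscale J c u) \<le> \<epsilon>" by simp
    qed
    have e1: "cmod (1 - - c) \<le> real (card Tn) * \<epsilon>"
      by (rule estimate[OF cs Tnf n1(1) o1 lin W(5) W(3)]) (use cFm Tn(2) cl1 in simp_all)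
    have e2: "cmod (1 - c) \<le> real (card Tp) * \<epsilon>"
      by (rule estimate[OF cs Tpf n1(2) o2 lin W(5) W(3)]) (use cFm cTp cl2 in simp_all)
    have "cmod ((1 - - c) + (1 - c)) \<le> cmod (1 - - c) + cmod (1 - c)" by (rule norm_triangle_ineq)
    also have "\<dots> \<le> 1" using e1 e2 Tn(2) cTp me by simp
    finally show False by simp
  qed
  have "pclass J V \<notin> ?Q closure_of set_pow ?G (conj_pm ?G g) n"
    using Oopen BO disj by (auto simp: in_closure_of)
  moreover have "pclass J V \<in> carrier ?G" using V(1) by (simp add: pu_carrier[OF cs])
  ultimately show False using n by simp
qed


theorem mainTheorem7:
  fixes X :: "'a set" and J :: "'h::{real_inner,complete_space} \<Rightarrow> 'h"
  shows "(infinite X \<longrightarrow>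
            \<not> top_bounded_normal_generation (BijGroup X) (pointwise_top X))
       \<and> (complex_structure J \<and> infinite_dimensional TYPE('h) \<longrightarrow>
            \<not> top_bounded_normal_generation (projective_unitary_group J)
                 (quotient_topology (SOT_unitary J) (pclass J)))"
  using part1[of X] part2[of J] by blast

end
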